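(* Let $(X,d,\kappa)$ be a digital metric space with $X$ finite, and let $T:X\to X$ be a weakly uniformly strict digital contraction. Then $T$ is a digital contraction map, i.e., there exists $\alpha\in(0,1)$ such that $d(T(x),T(y))\le\alpha\,d(x,y)$ for all $x,y\in X$.
   Context: A digital metric space is a triple $(X,d,\kappa)$ where $X\subset\mathbb{Z}^n$ for some positive integer $n$, $\kappa$ is an adjacency relation on $X$, and $d$ is a metric on $X$. $T:X\to X$ is a weakly uniformly strict digital contraction if for every $\varepsilon>0$ there exists $\delta>0$ such that for all $x,y\in X$, $\varepsilon\le d(x,y)<\varepsilon+\delta$ implies $d(T(x),T(y))<\varepsilon$. *)

theory Defs
  imports "HOL-Analysis.Analysis"
begin

definition adjacency_on :: "'a set \<Rightarrow> ('a \<Rightarrow> 'a \<Rightarrow> bool) \<Rightarrow> bool" where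
  "adjacency_on X \<kappa> \<longleftrightarrow> (\<forall>x y. \<kappa> x y \<longrightarrow> x \<in> X \<and> y \<in> X) \<and>
     (\<forall>x\<in>X. \<not> \<kappa> x x) \<and> (\<forall>x y. \<kappa> x y \<longrightarrow> \<kappa> y x)"

definition digital_metric_space ::
  "(int ^ 'n) set \<Rightarrow> (int ^ 'n \<Rightarrow> int ^ 'n \<Rightarrow> real) \<Rightarrow> (int ^ 'n \<Rightarrow> int ^ 'n \<Rightarrow> bool) \<Rightarrow> bool" where
  "digital_metric_space X d \<kappa> \<longleftrightarrow> Metric_space X d \<and> adjacency_on X \<kappa>"

definition weakly_uniformly_strict_digital_contraction ::
  "'a set \<Rightarrow> ('a \<Rightarrow> 'a \<Rightarrow> real) \<Rightarrow> ('a \<Rightarrow> 'a) \<Rightarrow> bool" where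
  "weakly_uniformly_strict_digital_contraction X d T \<longleftrightarrow>
     T ` X \<subseteq> X \<and>
     (\<forall>\<epsilon>>0. \<exists>\<delta>>0. \<forall>x\<in>X. \<forall>y\<in>X.
        \<epsilon> \<le> d x y \<and> d x y < \<epsilon> + \<delta> \<longrightarrow> d (T x) (T y) < \<epsilon>)"

definition digital_contraction_map ::
  "'a set \<Rightarrow> ('a \<Rightarrow> 'a \<Rightarrow> real) \<Rightarrow> ('a \<Rightarrow> 'a) \<Rightarrow> bool" where
  "digital_contraction_map X d T \<longleftrightarrow>
     T ` X \<subseteq> X \<and>
     (\<exists>\<alpha>. 0 < \<alpha> \<and> \<alpha> < 1 \<and> (\<forall>x\<in>X. \<forall>y\<in>X. d (T x) (T y) \<le> \<alpha> * d x y))"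

end

theory Submission
  imports Defs
begin

theorem corollary8p3:
  fixes X :: "(int ^ 'n) set" and d :: "int ^ 'n \<Rightarrow> int ^ 'n \<Rightarrow> real"
    and \<kappa> :: "int ^ 'n \<Rightarrow> int ^ 'n \<Rightarrow> bool" and T :: "int ^ 'n \<Rightarrow> int ^ 'n"
  assumes "digital_metric_space X d \<kappa>"
    and "finite X"
    and "weakly_uniformly_strict_digital_contraction X d T"
  shows "digital_contraction_map X d T"
proof -
  have M: "Metric_space X d" using assms(1) by (simp add: digital_metric_space_def)
  have TX: "T ` X \<subseteq> X" and W: "\<And>e. e > 0 \<Longrightarrow> \<exists>\<delta>>0. \<forall>x\<in>X. \<forall>y\<in>X.
        e \<le> d x y \<and> d x y < e + \<delta> \<longrightarrow> d (T x) (T y) < e"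
    using assms(3) unfolding weakly_uniformly_strict_digital_contraction_def by auto
  have pos: "\<And>x y. x \<in> X \<Longrightarrow> y \<in> X \<Longrightarrow> x \<noteq> y \<Longrightarrow> d x y > 0"
    using M by (simp add: Metric_space.zero Metric_space.nonneg order_less_le)
  have lt: "d (T x) (T y) < d x y" if xy: "x \<in> X" "y \<in> X" "x \<noteq> y" for x y
  proof -
    obtain \<delta> where "\<delta> > 0" "\<forall>u\<in>X. \<forall>v\<in>X. d x y \<le> d u v \<and> d u v < d x y + \<delta> \<longrightarrow> d (T u) (T v) < d x y"
      using W[OF pos[OF xy]] by blast
    then show ?thesis using xy by auto
  qed
  define S where "S = (\<lambda>(x,y). d (T x) (T y) / d x y) ` {p \<in> X \<times> X. fst p \<noteq> snd p}"
  have fS: "finite S" unfolding S_def using assms(2) by auto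
  define a where "a = Max (insert (1/2) S)"
  have a1: "a \<ge> 1/2" unfolding a_def using fS by (intro Max_ge) auto
  have S1: "\<forall>s\<in>S. s < 1" unfolding S_def
    using lt pos by (auto simp: divide_less_eq)
  have a2: "a < 1" unfolding a_def using fS S1 by (subst Max_less_iff) auto
  have "d (T x) (T y) \<le> a * d x y" if "x \<in> X" "y \<in> X" for x y
  proof (cases "x = y")
    case True
    have "T y \<in> X" using TX that by auto
    then show ?thesis using M True that by (simp add: Metric_space.mdist_zero)
  next
    case False
    have "d (T x) (T y) / d x y \<in> S" unfolding S_def using that False by force
    hence "d (T x) (T y) / d x y \<le> a" unfolding a_def using fS by simp
    then show ?thesis using pos[OF that False] by (simp add: divide_le_eq mult.commute)
  qed
  then show ?thesis unfolding digital_contraction_map_def using TX a1 a2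
    by (intro conjI exI[of _ a]) auto
qed

end
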